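(* Let $k\ge1$, and let $\mathcal P=\{p_1,\dots,p_{k^2}\}$ be a family of real polynomials in the commuting variables $x_1,\dots,x_{2k^2}$ admitting an nc representation $p(X,Y)$ of degree $d>1$. Let $s>t\ge2$ and $a\ne0$, and suppose that, counting over all polynomials, exactly $k$ terms of the form $a\,x_u^sx_v^t$ ($u\ne v$) appear in the family, namely $a\,x_{i_1}^sx_{j_1}^t,\dots,a\,x_{i_k}^sx_{j_k}^t$. If for each $n$ one of $x_{i_n},x_{j_n}$ is a diagonal entry of $X$ and the other is the diagonal entry of $Y$ in the same position, then $x_{i_1},\dots,x_{i_k}$ are the diagonal entries of one of the matrices $X,Y$ and $x_{j_1},\dots,x_{j_k}$ are the diagonal entries of the other.
   Context: The family $\mathcal P$ admits an nc representation $p(X,Y)$ if there are $k\times k$ matrices $X,Y$ whose $2k^2$ entries are the variables $x_1,\dots,x_{2k^2}$, each used exactly once, and a noncommutative polynomial $p$ in two letters with real coefficients such that the matrix $p(X,Y)$ is a $k\times k$ array whose entries are $p_1,\dots,p_{k^2}$, each exactly once. A "term" means a monomial with its nonzero coefficient after collecting like terms. *)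

theory Defs
  imports Complex_Main "HOL-Library.Multiset" "HOL-Library.Poly_Mapping"
begin

(* Commuting variables are numbered by nat; a (commutative) monomial is a multiset
   of variable indices; a commutative real polynomial is given by its coefficient
   function  nat multiset => real.
   A noncommutative polynomial in two letters is a finitely supported function
   from words to real coefficients; letter False = X, letter True = Y.
   The k x k matrices X, Y are encoded by  ent :: bool => nat => nat => nat :
   ent False i j is the index of the variable in entry (i,j) of X,
   ent True  i j the one of Y (indices i,j < k). *)

type_synonym ncpoly = "bool list \<Rightarrow>\<^sub>0 real"

definition nc_degree :: "ncpoly \<Rightarrow> nat" where
  "nc_degree p = (if Poly_Mapping.keys p = {} then 0 else Max (length ` Poly_Mapping.keys p))"

definition idx_paths :: "nat \<Rightarrow> nat \<Rightarrow> nat \<Rightarrow> nat \<Rightarrow> nat list set" where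
  "idx_paths k L r c =
     {is. length is = Suc L \<and> set is \<subseteq> {..<k} \<and> hd is = r \<and> last is = c}"

definition path_mono :: "(bool \<Rightarrow> nat \<Rightarrow> nat \<Rightarrow> nat) \<Rightarrow> bool list \<Rightarrow> nat list \<Rightarrow> nat multiset" where
  "path_mono ent w is = (\<Sum>l<length w. {# ent (w ! l) (is ! l) (is ! Suc l) #})"

(* coefficient of the monomial m in the (r,c) entry of the matrix p(X,Y) *)
definition nc_eval_entry ::
  "nat \<Rightarrow> (bool \<Rightarrow> nat \<Rightarrow> nat \<Rightarrow> nat) \<Rightarrow> ncpoly \<Rightarrow> nat \<Rightarrow> nat \<Rightarrow> nat multiset \<Rightarrow> real" where
  "nc_eval_entry k ent p r c m =
     (\<Sum>w\<in>Poly_Mapping.keys p. Poly_Mapping.lookup p w *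
        real (card {is \<in> idx_paths k (length w) r c. path_mono ent w is = m}))"

definition var_matrices :: "nat \<Rightarrow> (bool \<Rightarrow> nat \<Rightarrow> nat \<Rightarrow> nat) \<Rightarrow> bool" where
  "var_matrices k ent \<longleftrightarrow>
     bij_betw (\<lambda>(b, i, j). ent b i j) (UNIV \<times> {..<k} \<times> {..<k}) {1..2 * k ^ 2}"

definition nc_representation ::
  "nat \<Rightarrow> (nat \<Rightarrow> nat multiset \<Rightarrow> real) \<Rightarrow> (bool \<Rightarrow> nat \<Rightarrow> nat \<Rightarrow> nat) \<Rightarrow> ncpoly \<Rightarrow> bool" where
  "nc_representation k fam ent p \<longleftrightarrow>
     var_matrices k ent \<and>
     (\<exists>\<sigma>. bij_betw \<sigma> ({..<k} \<times> {..<k}) {1..k ^ 2} \<and>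
          (\<forall>r<k. \<forall>c<k. fam (\<sigma> (r, c)) = nc_eval_entry k ent p r c))"

definition sv_terms ::
  "nat \<Rightarrow> (nat \<Rightarrow> nat multiset \<Rightarrow> real) \<Rightarrow> real \<Rightarrow> nat \<Rightarrow> nat \<Rightarrow> (nat \<times> nat \<times> nat) set" where
  "sv_terms k fam a s t =
     {(n, u, v). n \<in> {1..k ^ 2} \<and> u \<noteq> v \<and>
        fam n (replicate_mset s u + replicate_mset t v) = a}"

end

theory Submission imports Defs begin

lemma ent_inj:
  assumes "var_matrices k ent" "i<k" "j<k" "i'<k" "j'<k" "ent b i j = ent b' i' j'"
  shows "b=b' \<and> i=i' \<and> j=j'"
proof -
  have "inj_on (\<lambda>(b, i, j). ent b i j) (UNIV \<times> {..<k} \<times> {..<k})"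
    using assms(1) unfolding var_matrices_def bij_betw_def by blast
  from inj_onD[OF this, of "(b,i,j)" "(b',i',j')"] assms show ?thesis by auto
qed

lemma sum_single_mset: "(\<Sum>l<n. {# f l #}) = mset (map f [0..<n])"
  by (induction n) auto

lemma image_bool_mset:
  fixes A :: "bool multiset"
  shows "image_mset g A = replicate_mset (count A b) (g b) + replicate_mset (count A (\<not>b)) (g (\<not>b))"
proof -
  have "A = replicate_mset (count A b) b + replicate_mset (count A (\<not>b)) (\<not>b)"
    by (rule multiset_eqI) (cases b; auto)
  then have "image_mset g A = image_mset g (replicate_mset (count A b) b + replicate_mset (count A (\<not>b)) (\<not>b))"
    by simp
  also have "\<dots> = replicate_mset (count A b) (g b) + replicate_mset (count A (\<not>b)) (g (\<not>b))"
    by simp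
  finally show ?thesis .
qed

lemma rep2_eq:
  assumes "u \<noteq> v"
  shows "(replicate_mset a u + replicate_mset b v = replicate_mset s u + replicate_mset t v) \<longleftrightarrow> a = s \<and> b = t"
proof
  assume h: "replicate_mset a u + replicate_mset b v = replicate_mset s u + replicate_mset t v"
  from arg_cong[OF h, of "\<lambda>M. count M u"] arg_cong[OF h, of "\<lambda>M. count M v"] assms
  show "a = s \<and> b = t" by auto
qed auto


lemma path_set:
  fixes b :: bool and t :: nat
  assumes vm: "var_matrices k ent" and mk: "m<k" and rk: "r<k" and ck: "c<k" and s0: "s > 0"
  defines "M \<equiv> replicate_mset s (ent b m m) + replicate_mset t (ent (\<not>b) m m)"
  shows "{is \<in> idx_paths k (length w) r c. path_mono ent w is = M} =
    (if r = m \<and> c = m \<and> count (mset w) b = s \<and> count (mset w) (\<not>b) = t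
     then {replicate (Suc (length w)) m} else {})"
proof -
  have uv: "ent b m m \<noteq> ent (\<not>b) m m" using ent_inj[OF vm mk mk mk mk] by blast
  have pm: "path_mono ent w is = mset (map (\<lambda>l. ent (w!l) (is!l) (is!Suc l)) [0..<length w])" for "is"
    unfolding path_mono_def by (rule sum_single_mset)
  have rep: "path_mono ent w (replicate (Suc (length w)) m) = image_mset (\<lambda>x. ent x m m) (mset w)"
  proof -
    have "map (\<lambda>l. ent (w!l) (replicate (Suc (length w)) m ! l) (replicate (Suc (length w)) m ! Suc l)) [0..<length w]
        = map (\<lambda>l. ent (w!l) m m) [0..<length w]" by (rule map_cong) (auto simp del: replicate_Suc simp: nth_replicate)
    also have "\<dots> = map (\<lambda>x. ent x m m) (map ((!) w) [0..<length w])" by simp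
    also have "\<dots> = map (\<lambda>x. ent x m m) w" by (simp add: map_nth)
    finally have X: "map (\<lambda>l. ent (w!l) (replicate (Suc (length w)) m ! l) (replicate (Suc (length w)) m ! Suc l)) [0..<length w] = map (\<lambda>x. ent x m m) w" .
    show ?thesis by (simp only: pm X mset_map)
  qed
  have eqc: "path_mono ent w (replicate (Suc (length w)) m) = M \<longleftrightarrow>
      count (mset w) b = s \<and> count (mset w) (\<not>b) = t"
    unfolding rep M_def image_bool_mset[of _ _ b] using rep2_eq[OF uv] by simp
  show ?thesis
  proof (cases "r = m \<and> c = m \<and> count (mset w) b = s \<and> count (mset w) (\<not>b) = t")
    case True
    have "{is \<in> idx_paths k (length w) r c. path_mono ent w is = M} \<subseteq> {replicate (Suc (length w)) m}"
    proof
      fix "is" assume H: "is \<in> {is \<in> idx_paths k (length w) r c. path_mono ent w is = M}"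
      then have len: "length is = Suc (length w)" and sk: "set is \<subseteq> {..<k}" and hd: "hd is = r"
        and lst: "last is = c" and pe: "path_mono ent w is = M"
        by (auto simp: idx_paths_def)
      have step: "is!l = m \<and> is!Suc l = m" if l: "l < length w" for l
      proof -
        have "ent (w!l) (is!l) (is!Suc l) \<in># path_mono ent w is" using l pm by auto
        then have "ent (w!l) (is!l) (is!Suc l) \<in># M" using pe by simp
        then have "ent (w!l) (is!l) (is!Suc l) = ent b m m \<or> ent (w!l) (is!l) (is!Suc l) = ent (\<not>b) m m"
          unfolding M_def by (auto split: if_splits)
        moreover have "is!l < k" "is!Suc l < k" using sk len l by (auto simp: subset_iff)
        ultimately show ?thesis using ent_inj[OF vm _ _ mk mk] by metis
      qed
      have wne: "length w > 0"
      proof (rule ccontr)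
        assume "\<not> length w > 0"
        then have "path_mono ent w is = {#}" using pm by simp
        then show False using pe s0 unfolding M_def by simp
      qed
      have "\<forall>i<length is. is ! i = m"
      proof (intro allI impI)
        fix i assume "i < length is"
        then show "is ! i = m" using step wne len
          by (cases i) auto
      qed
      then have "is = replicate (Suc (length w)) m" using len
        by (intro replicate_eqI) (auto simp: in_set_conv_nth)
      then show "is \<in> {replicate (Suc (length w)) m}" by simp
    qed
    moreover have "replicate (Suc (length w)) m \<in> {is \<in> idx_paths k (length w) r c. path_mono ent w is = M}"
      using True eqc mk unfolding idx_paths_def by (auto simp: last_replicate)
    ultimately show ?thesis using True by auto
  next
    case False
    have "{is \<in> idx_paths k (length w) r c. path_mono ent w is = M} = {}"
    proof (rule ccontr)
      assume "{is \<in> idx_paths k (length w) r c. path_mono ent w is = M} \<noteq> {}"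
      then obtain "is" where H: "is \<in> {is \<in> idx_paths k (length w) r c. path_mono ent w is = M}" by blast
      then have len: "length is = Suc (length w)" and sk: "set is \<subseteq> {..<k}" and hd: "hd is = r"
        and lst: "last is = c" and pe: "path_mono ent w is = M"
        by (auto simp: idx_paths_def)
      have step: "is!l = m \<and> is!Suc l = m" if l: "l < length w" for l
      proof -
        have "ent (w!l) (is!l) (is!Suc l) \<in># path_mono ent w is" using l pm by auto
        then have "ent (w!l) (is!l) (is!Suc l) \<in># M" using pe by simp
        then have "ent (w!l) (is!l) (is!Suc l) = ent b m m \<or> ent (w!l) (is!l) (is!Suc l) = ent (\<not>b) m m"
          unfolding M_def by (auto split: if_splits)
        moreover have "is!l < k" "is!Suc l < k" using sk len l by (auto simp: subset_iff)
        ultimately show ?thesis using ent_inj[OF vm _ _ mk mk] by metis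
      qed
      have wne: "length w > 0"
      proof (rule ccontr)
        assume "\<not> length w > 0"
        then have "path_mono ent w is = {#}" using pm by simp
        then show False using pe s0 unfolding M_def by simp
      qed
      have "\<forall>i<length is. is ! i = m"
      proof (intro allI impI)
        fix i assume "i < length is"
        then show "is ! i = m" using step wne len
          by (cases i) auto
      qed
      then have isr: "is = replicate (Suc (length w)) m" using len
        by (intro replicate_eqI) (auto simp: in_set_conv_nth)
      then have "r = m" "c = m" using hd lst by (auto simp: last_replicate)
      moreover have "count (mset w) b = s \<and> count (mset w) (\<not>b) = t" using eqc pe isr by simp
      ultimately show False using False by simp
    qed
    then show ?thesis by (simp only: if_not_P[OF False])
  qed
qed


definition Cc :: "ncpoly \<Rightarrow> bool \<Rightarrow> nat \<Rightarrow> nat \<Rightarrow> real" where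
  "Cc p b s t = (\<Sum>w\<in>Poly_Mapping.keys p. Poly_Mapping.lookup p w *
      (if count (mset w) b = s \<and> count (mset w) (\<not>b) = t then 1 else 0))"

lemma entry_coeff:
  fixes b :: bool and t :: nat
  assumes vm: "var_matrices k ent" and mk: "m<k" and rk: "r<k" and ck: "c<k" and s0: "s > 0"
  shows "nc_eval_entry k ent p r c (replicate_mset s (ent b m m) + replicate_mset t (ent (\<not>b) m m))
       = (if r = m \<and> c = m then Cc p b s t else 0)"
proof -
  have "nc_eval_entry k ent p r c (replicate_mset s (ent b m m) + replicate_mset t (ent (\<not>b) m m))
     = (\<Sum>w\<in>Poly_Mapping.keys p. Poly_Mapping.lookup p w *
         (if r = m \<and> c = m \<and> count (mset w) b = s \<and> count (mset w) (\<not>b) = t then 1 else 0))"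
    unfolding nc_eval_entry_def
    by (rule sum.cong[OF refl], subst path_set[OF vm mk rk ck s0]) simp
  also have "\<dots> = (if r = m \<and> c = m then Cc p b s t else 0)"
    unfolding Cc_def by (auto intro: sum.neutral)
  finally show ?thesis .
qed


theorem lemma2p19:
  fixes k :: nat and fam :: "nat \<Rightarrow> nat multiset \<Rightarrow> real"
    and ent :: "bool \<Rightarrow> nat \<Rightarrow> nat \<Rightarrow> nat" and p :: ncpoly
    and s t :: nat and a :: real
  assumes "k \<ge> 1"
    and "nc_representation k fam ent p"
    and "nc_degree p > 1"
    and "s > t" and "t \<ge> 2" and "a \<noteq> 0"
    and "card (sv_terms k fam a s t) = k"
    and "\<forall>(n, u, v) \<in> sv_terms k fam a s t. \<exists>m<k.
            (u = ent False m m \<and> v = ent True m m) \<or> (u = ent True m m \<and> v = ent False m m)"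
  shows "({u. \<exists>n v. (n, u, v) \<in> sv_terms k fam a s t} = {ent False m m | m. m < k} \<and>
          {v. \<exists>n u. (n, u, v) \<in> sv_terms k fam a s t} = {ent True m m | m. m < k}) \<or>
         ({u. \<exists>n v. (n, u, v) \<in> sv_terms k fam a s t} = {ent True m m | m. m < k} \<and>
          {v. \<exists>n u. (n, u, v) \<in> sv_terms k fam a s t} = {ent False m m | m. m < k})"
proof -
  define Sv where "Sv = sv_terms k fam a s t"
  have vm: "var_matrices k ent" using assms(2) unfolding nc_representation_def by blast
  obtain \<sigma> where bij: "bij_betw \<sigma> ({..<k} \<times> {..<k}) {1..k ^ 2}"
    and fe: "\<forall>r<k. \<forall>c<k. fam (\<sigma> (r, c)) = nc_eval_entry k ent p r c"
    using assms(2) unfolding nc_representation_def by blast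
  have s0: "s > 0" using assms(4) by simp
  have E: "fam (\<sigma> (r, c)) (replicate_mset s (ent b m m) + replicate_mset t (ent (\<not>b) m m))
       = (if r = m \<and> c = m then Cc p b s t else 0)" if "r<k" "c<k" "m<k" for r c m b
    using fe that entry_coeff[OF vm \<open>m<k\<close> \<open>r<k\<close> \<open>c<k\<close> s0] by simp
  define T where "T b = (\<lambda>m. (\<sigma>(m,m), ent b m m, ent (\<not>b) m m)) ` {..<k}" for b
  have C1: "T b \<subseteq> Sv" if "Cc p b s t = a" for b
  proof
    fix x assume "x \<in> T b"
    then obtain m where m: "m<k" and x: "x = (\<sigma>(m,m), ent b m m, ent (\<not>b) m m)"
      unfolding T_def by blast
    have "\<sigma>(m,m) \<in> {1..k^2}" using bij m by (auto dest: bij_betwE)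
    moreover have "ent b m m \<noteq> ent (\<not>b) m m" using ent_inj[OF vm m m m m] by blast
    moreover have "fam (\<sigma>(m,m)) (replicate_mset s (ent b m m) + replicate_mset t (ent (\<not>b) m m)) = a"
      using E[OF m m m] that by simp
    ultimately show "x \<in> Sv" unfolding Sv_def sv_terms_def x by simp
  qed
  have C2: "\<exists>b. Cc p b s t = a \<and> x \<in> T b" if "x \<in> Sv" for x
  proof -
    obtain n u v where x: "x = (n,u,v)" by (cases x) auto
    from that assms(8) obtain m where m: "m<k" and
      uv: "(u = ent False m m \<and> v = ent True m m) \<or> (u = ent True m m \<and> v = ent False m m)"
      unfolding Sv_def x by fastforce
    from uv obtain b where ub: "u = ent b m m" and vb: "v = ent (\<not>b) m m" by auto
    have n: "n \<in> {1..k^2}" and fa: "fam n (replicate_mset s u + replicate_mset t v) = a"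
      using that unfolding Sv_def sv_terms_def x by auto
    have "n \<in> \<sigma> ` ({..<k} \<times> {..<k})" using n bij_betw_imp_surj_on[OF bij] by simp
    then obtain y where y: "y \<in> {..<k} \<times> {..<k}" "n = \<sigma> y" by blast
    obtain r c where rc: "r<k" "c<k" "n = \<sigma>(r,c)" using y by (cases y) auto
    have "(if r = m \<and> c = m then Cc p b s t else 0) = a"
      using E[OF rc(1,2) m, of b] fa rc(3) ub vb by simp
    then have "r = m" "c = m" "Cc p b s t = a" using assms(6) by (auto split: if_splits)
    then show ?thesis using m unfolding x T_def rc(3) ub vb by blast
  qed
  have cardT: "card (T b) = k" for b
  proof -
    have "inj_on (\<lambda>m. (\<sigma>(m,m), ent b m m, ent (\<not>b) m m)) {..<k}"
      by (rule inj_onI) (use ent_inj[OF vm] in auto)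
    then show ?thesis unfolding T_def by (simp add: card_image)
  qed
  have disj: "T False \<inter> T True = {}"
  proof (rule ccontr)
    assume "T False \<inter> T True \<noteq> {}"
    then obtain m m' where "m<k" "m'<k" "ent False m m = ent True m' m'" unfolding T_def by auto
    then show False using ent_inj[OF vm, of m m m' m' False True] by simp
  qed
  have finT: "finite (T b)" for b unfolding T_def by simp
  have finSv: "finite Sv" and cSv: "card Sv = k" using assms(7,1) unfolding Sv_def
    by (auto intro: card_ge_0_finite)
  have neSv: "Sv \<noteq> {}" using cSv assms(1) by auto
  then obtain x where "x \<in> Sv" by blast
  then obtain b where b: "Cc p b s t = a" using C2 by blast
  have nb: "Cc p (\<not>b) s t \<noteq> a"
  proof
    assume "Cc p (\<not>b) s t = a"
    then have "T False \<union> T True \<subseteq> Sv" using C1 b by (cases b) auto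
    then have "card (T False \<union> T True) \<le> card Sv" using finSv by (rule card_mono[rotated])
    also have "card (T False \<union> T True) = 2 * k" using card_Un_disjoint[OF finT finT disj] cardT by simp
    finally show False using cSv assms(1) by simp
  qed
  have SvT: "Sv = T b"
  proof
    show "T b \<subseteq> Sv" using C1 b .
    show "Sv \<subseteq> T b"
    proof
      fix x assume "x \<in> Sv"
      then obtain b' where "Cc p b' s t = a" "x \<in> T b'" using C2 by blast
      moreover have "b' = b" using calculation(1) nb b by (cases b; cases b') auto
      ultimately show "x \<in> T b" by simp
    qed
  qed
  have U: "{u. \<exists>n v. (n, u, v) \<in> Sv} = {ent b m m | m. m < k}"
    unfolding SvT T_def by auto
  have V: "{v. \<exists>n u. (n, u, v) \<in> Sv} = {ent (\<not>b) m m | m. m < k}"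
    unfolding SvT T_def by auto
  show ?thesis using U V unfolding Sv_def by (cases b) auto
qed

end
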